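(* Let $q\ge 1$ and $n\ge 0$ be integers, let $a_1,\dots,a_n\in\mathbb{Z}_q$ be reduced residues (i.e. $\gcd(a_i,q)=1$ for all $i$), and let $P\subseteq\mathbb{Z}_q$ with $|P|=k$. Then the number of the $2^n$ choices $(\varepsilon_1,\dots,\varepsilon_n)\in\{0,1\}^n$ for which $\sum_{i=1}^n\varepsilon_i a_i \in P$ is at most $$\sum_{\substack{j\in\mathbb{Z}\\ (n-k)/2\le j<(n+k)/2}}\binom{n}{j}_q .$$ Moreover, this bound is best possible: for all such $q,n,k$ there exist reduced residues $a_1,\dots,a_n$ and a set $P\subseteq\mathbb{Z}_q$ with $|P|=k$ for which equality holds.
   Context: $\mathbb{Z}_q$ denotes the additive group of integers modulo $q$. For an integer $s$, the mod $q$ binomial coefficient is $\binom{n}{s}_q=|\{A\subseteq\{1,\dots,n\}: |A|\equiv s \pmod q\}|=\sum_{j\equiv s \ (\mathrm{mod}\ q),\,0\le j\le n}\binom{n}{j}$. The sum in the claim is the sum of the $k$ "middle" mod $q$ binomial coefficients in $n$. *)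

theory Defs
  imports "HOL-Library.FuncSet" "HOL-Number_Theory.Cong"
begin

definition binom_mod :: "nat \<Rightarrow> int \<Rightarrow> nat \<Rightarrow> nat" where
  "binom_mod n s q = card {A. A \<subseteq> {1..n} \<and> [int (card A) = s] (mod int q)}"

definition middle_sum :: "nat \<Rightarrow> nat \<Rightarrow> nat \<Rightarrow> nat" where
  "middle_sum n k q = (\<Sum>j\<in>{j::int. int n - int k \<le> 2 * j \<and> 2 * j < int n + int k}. binom_mod n j q)"

text \<open>Number of choices (eps_1,...,eps_n) in {0,1}^n with sum eps_i a_i in P (mod q);
  residues mod q are represented by their representatives in {0..<q}.\<close>
definition hits :: "nat \<Rightarrow> nat \<Rightarrow> (nat \<Rightarrow> int) \<Rightarrow> int set \<Rightarrow> nat" where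
  "hits q n a P = card {e \<in> {1..n} \<rightarrow>\<^sub>E {0::nat, 1}.
      (\<Sum>i=1..n. int (e i) * a i) mod int q \<in> P}"

end

theory Submission
  imports Defs
begin

definition ssum :: "(nat \<Rightarrow> int) \<Rightarrow> nat set \<Rightarrow> int" where
  "ssum a A = (\<Sum>i\<in>A. a i)"

definition cnt :: "nat \<Rightarrow> nat \<Rightarrow> (nat \<Rightarrow> int) \<Rightarrow> int \<Rightarrow> nat" where
  "cnt q n a x = card {A. A \<subseteq> {1..n} \<and> (\<Sum>i\<in>A. a i) mod int q = x}"

lemma hits_eq:
  "hits q n a P = card {A. A \<subseteq> {1..n} \<and> (\<Sum>i\<in>A. a i) mod int q \<in> P}"
proof -
  let ?E = "{e \<in> {1..n} \<rightarrow>\<^sub>E {0::nat, 1}. (\<Sum>i=1..n. int (e i) * a i) mod int q \<in> P}"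
  let ?S = "{A. A \<subseteq> {1..n} \<and> (\<Sum>i\<in>A. a i) mod int q \<in> P}"
  let ?f = "\<lambda>e. {i\<in>{1..n}. e i = (1::nat)}"
  let ?g = "\<lambda>A. (\<lambda>i. if i \<in> {1..n} then (if i \<in> A then 1::nat else 0) else undefined)"
  have key: "(\<Sum>i=1..n. int (e i) * a i) = (\<Sum>i\<in>?f e. a i)" if "e \<in> {1..n} \<rightarrow>\<^sub>E {0::nat, 1}" for e
  proof -
    have "(\<Sum>i=1..n. int (e i) * a i) = (\<Sum>i=1..n. if e i = 1 then a i else 0)"
      apply (rule sum.cong) using that by (auto simp: PiE_def Pi_def)
    also have "\<dots> = (\<Sum>i\<in>?f e. a i)" by (simp add: sum.If_cases Int_def conj_assoc)
    finally show ?thesis .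
  qed
  have "bij_betw ?f ?E ?S"
  proof (rule bij_betw_byWitness[where f' = ?g])
    show "\<forall>e\<in>?E. ?g (?f e) = e"
      by (auto simp: PiE_def Pi_def extensional_def fun_eq_iff)
    show "\<forall>A\<in>?S. ?f (?g A) = A" by auto
    show "?f ` ?E \<subseteq> ?S" using key by auto
    show "?g ` ?S \<subseteq> ?E"
    proof
      fix e assume "e \<in> ?g ` ?S"
      then obtain A where A: "A \<in> ?S" "e = ?g A" by blast
      have e1: "e \<in> {1..n} \<rightarrow>\<^sub>E {0::nat, 1}" using A by (auto simp: PiE_def Pi_def extensional_def)
      have "?f e = A" using A by auto
      then show "e \<in> ?E" using key[OF e1] A e1 by auto
    qed
  qed
  then show ?thesis unfolding hits_def by (simp add: bij_betw_same_card)
qed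

lemma sum_cnt:
  assumes "finite P"
  shows "(\<Sum>x\<in>P. cnt q n a x) = card {A. A \<subseteq> {1..n} \<and> (\<Sum>i\<in>A. a i) mod int q \<in> P}"
  using assms
proof (induction P rule: finite_induct)
  case empty then show ?case by simp
next
  case (insert x F)
  have "{A. A \<subseteq> {1..n} \<and> (\<Sum>i\<in>A. a i) mod int q \<in> insert x F}
     = {A. A \<subseteq> {1..n} \<and> (\<Sum>i\<in>A. a i) mod int q = x} \<union> {A. A \<subseteq> {1..n} \<and> (\<Sum>i\<in>A. a i) mod int q \<in> F}"
    by auto
  moreover have "card (\<dots>) = cnt q n a x + card {A. A \<subseteq> {1..n} \<and> (\<Sum>i\<in>A. a i) mod int q \<in> F}"
    unfolding cnt_def
    by (rule card_Un_disjoint) (use insert in \<open>auto intro: finite_subset[of _ "Pow {1..n}"]\<close>)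
  ultimately show ?case using insert by simp
qed

lemma mod_inj:
  fixes x y :: int
  assumes "x mod int q = y mod int q" "\<bar>x - y\<bar> < int q"
  shows "x = y"
proof -
  have d: "int q dvd (x - y)" using assms(1) by (simp add: mod_eq_dvd_iff)
  show ?thesis
  proof (rule ccontr)
    assume "x \<noteq> y"
    then have "\<bar>int q\<bar> \<le> \<bar>x - y\<bar>" using d by (intro dvd_imp_le_int) auto
    then show False using assms(2) by simp
  qed
qed

lemma step:
  assumes "0 \<le> x" "x < int q"
  shows "cnt q (Suc n) a x = cnt q n a x + cnt q n a ((x - a (Suc n)) mod int q)"
proof -
  let ?b = "a (Suc n)"
  let ?L = "{A. A \<subseteq> {1..Suc n} \<and> sum a A mod int q = x}"
  let ?R1 = "{A. A \<subseteq> {1..n} \<and> sum a A mod int q = x}"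
  let ?R2 = "{B. B \<subseteq> {1..n} \<and> sum a B mod int q = (x - ?b) mod int q}"
  have xm: "x mod int q = x" using assms by simp
  have eq: "?L = ?R1 \<union> insert (Suc n) ` ?R2"
  proof (intro equalityI subsetI)
    fix A assume A: "A \<in> ?L"
    show "A \<in> ?R1 \<union> insert (Suc n) ` ?R2"
    proof (cases "Suc n \<in> A")
      case False
      then have "A \<subseteq> {1..n}" using A by (auto simp: le_Suc_eq)
      then show ?thesis using A by auto
    next
      case True
      define B where "B = A - {Suc n}"
      have AB: "A = insert (Suc n) B" "Suc n \<notin> B" using True B_def by auto
      have B1: "B \<subseteq> {1..n}" using A B_def by (auto simp: le_Suc_eq)
      have fin: "finite B" using B1 finite_subset by blast
      have "sum a A = ?b + sum a B" using AB fin by simp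
      then have "sum a B mod int q = (sum a A - ?b) mod int q" by simp
      also have "\<dots> = (sum a A mod int q - ?b) mod int q" by (simp add: mod_diff_left_eq)
      also have "\<dots> = (x - ?b) mod int q" using A by simp
      finally have "B \<in> ?R2" using B1 by simp
      then show ?thesis using AB by blast
    qed
  next
    fix A assume A: "A \<in> ?R1 \<union> insert (Suc n) ` ?R2"
    show "A \<in> ?L"
    proof (cases "A \<in> ?R1")
      case True then show ?thesis by auto
    next
      case False
      then obtain B where B: "B \<in> ?R2" "A = insert (Suc n) B" using A by blast
      have B1: "B \<subseteq> {1..n}" using B by simp
      have fin: "finite B" using B1 finite_subset by blast
      have nB: "Suc n \<notin> B" using B1 by auto
      have "sum a A = ?b + sum a B" using B nB fin by simp
      then have "sum a A mod int q = (?b + sum a B mod int q) mod int q" by (simp add: mod_add_right_eq)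
      also have "\<dots> = (?b + (x - ?b) mod int q) mod int q" using B by simp
      also have "\<dots> = x mod int q" by (simp add: mod_add_right_eq)
      finally show ?thesis using B1 B xm by auto
    qed
  qed
  have fin1: "finite ?R1" by (rule finite_subset[of _ "Pow {1..n}"]) auto
  have fin2: "finite ?R2" by (rule finite_subset[of _ "Pow {1..n}"]) auto
  have inj: "inj_on (insert (Suc n)) ?R2"
  proof (rule inj_onI)
    fix X Y assume XY: "X \<in> ?R2" "Y \<in> ?R2" "insert (Suc n) X = insert (Suc n) Y"
    have "Suc n \<notin> X" "Suc n \<notin> Y" using XY(1,2) by auto
    then show "X = Y" using XY(3) by (metis Diff_insert_absorb)
  qed
  have disj: "?R1 \<inter> insert (Suc n) ` ?R2 = {}" by auto
  have "card ?L = card ?R1 + card (insert (Suc n) ` ?R2)"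
    unfolding eq using fin1 fin2 disj by (intro card_Un_disjoint) auto
  also have "\<dots> = card ?R1 + card ?R2" using inj by (simp add: card_image)
  finally show ?thesis unfolding cnt_def .
qed

definition shift :: "nat \<Rightarrow> int \<Rightarrow> int set \<Rightarrow> int set" where
  "shift q b P = (\<lambda>x. (x - b) mod int q) ` P"

lemma shift_inj: "inj_on (\<lambda>x. (x - b) mod int q) {0..<int q}"
proof (rule inj_onI)
  fix x y assume x: "x \<in> {0..<int q}" and y: "y \<in> {0..<int q}"
    and e: "(x - b) mod int q = (y - b) mod int q"
  have "x mod int q = ((x - b) mod int q + b) mod int q" by (simp add: mod_add_left_eq)
  also have "\<dots> = ((y - b) mod int q + b) mod int q" using e by simp
  also have "\<dots> = y mod int q" by (simp add: mod_add_left_eq)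
  finally show "x = y" using x y by simp
qed

lemma shift_sub: "q \<ge> 1 \<Longrightarrow> shift q b P \<subseteq> {0..<int q}"
  by (auto simp: shift_def)

lemma card_shift: "P \<subseteq> {0..<int q} \<Longrightarrow> card (shift q b P) = card P"
  unfolding shift_def by (rule card_image) (rule inj_on_subset[OF shift_inj])

lemma finite_shift: "P \<subseteq> {0..<int q} \<Longrightarrow> finite (shift q b P)"
  unfolding shift_def by (rule finite_imageI) (rule finite_subset[of _ "{0..<int q}"], auto)

lemma sum_step:
  assumes "P \<subseteq> {0..<int q}"
  shows "(\<Sum>x\<in>P. cnt q (Suc n) a x) = (\<Sum>x\<in>P. cnt q n a x) + (\<Sum>y\<in>shift q (a (Suc n)) P. cnt q n a y)"
proof -
  have "(\<Sum>x\<in>P. cnt q (Suc n) a x) = (\<Sum>x\<in>P. cnt q n a x + cnt q n a ((x - a (Suc n)) mod int q))"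
    using assms by (intro sum.cong) (auto intro!: step)
  also have "\<dots> = (\<Sum>x\<in>P. cnt q n a x) + (\<Sum>x\<in>P. cnt q n a ((x - a (Suc n)) mod int q))"
    by (simp add: sum.distrib)
  also have "(\<Sum>x\<in>P. cnt q n a ((x - a (Suc n)) mod int q)) = (\<Sum>y\<in>shift q (a (Suc n)) P. cnt q n a y)"
    unfolding shift_def
    by (rule sum.reindex[symmetric, unfolded comp_def]) (rule inj_on_subset[OF shift_inj assms])
  finally show ?thesis .
qed

lemma cnt_0: "cnt q 0 a x = (if x = 0 then 1 else 0)"
proof -
  have "{A. A \<subseteq> {1..0::nat} \<and> (\<Sum>i\<in>A. a i) mod int q = x} = (if x = 0 then {{}} else {})"
    by auto
  then show ?thesis unfolding cnt_def by simp
qed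

lemma sum_cnt_le:
  assumes "finite P"
  shows "(\<Sum>x\<in>P. cnt q n a x) \<le> 2 ^ n"
proof -
  have "(\<Sum>x\<in>P. cnt q n a x) = card {A. A \<subseteq> {1..n} \<and> (\<Sum>i\<in>A. a i) mod int q \<in> P}"
    using sum_cnt[OF assms] .
  also have "\<dots> \<le> card (Pow {1..n})" by (rule card_mono) auto
  also have "\<dots> = 2 ^ n" by (simp add: card_Pow)
  finally show ?thesis .
qed

lemma sum_cnt_all:
  assumes "q \<ge> 1"
  shows "(\<Sum>x\<in>{0..<int q}. cnt q n a x) = 2 ^ n"
proof -
  have "(\<Sum>x\<in>{0..<int q}. cnt q n a x) = card {A. A \<subseteq> {1..n} \<and> (\<Sum>i\<in>A. a i) mod int q \<in> {0..<int q}}"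
    using sum_cnt by blast
  also have "{A. A \<subseteq> {1..n} \<and> (\<Sum>i\<in>A. a i) mod int q \<in> {0..<int q}} = Pow {1..n}"
    using assms by auto
  also have "card (Pow {1..n}) = 2 ^ n" by (simp add: card_Pow)
  finally show ?thesis .
qed

definition W :: "nat \<Rightarrow> nat \<Rightarrow> int set" where
  "W n k = {j. int n - int k \<le> 2 * j \<and> 2 * j < int n + int k}"

lemma W_ivl: "W n k = {(int n - int k + 1) div 2 ..< (int n - int k + 1) div 2 + int k}"
  unfolding W_def by (auto; presburger)

lemma card_W: "card (W n k) = k" and finite_W: "finite (W n k)"
  unfolding W_ivl by auto

lemma W_diff: "x \<in> W n k \<Longrightarrow> y \<in> W n k \<Longrightarrow> \<bar>x - y\<bar> < int k"
  unfolding W_def by auto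

lemma inj_W: "k \<le> q \<Longrightarrow> inj_on (\<lambda>j. j mod int q) (W n k)"
  by (rule inj_onI) (rule mod_inj, assumption, use W_diff in force)

definition R :: "nat \<Rightarrow> nat \<Rightarrow> nat \<Rightarrow> int set" where
  "R q n k = (\<lambda>j. j mod int q) ` W n k"

lemma card_R: "k \<le> q \<Longrightarrow> card (R q n k) = k"
  unfolding R_def using inj_W card_W by (simp add: card_image)

lemma R_sub: "q \<ge> 1 \<Longrightarrow> R q n k \<subseteq> {0..<int q}"
  unfolding R_def by auto

lemma finite_R: "finite (R q n k)"
  unfolding R_def using finite_W by simp

definition T :: "nat \<Rightarrow> nat \<Rightarrow> nat \<Rightarrow> nat" where
  "T q n k = (\<Sum>x\<in>R q n k. cnt q n (\<lambda>_. 1) x)"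

lemma middle_T:
  assumes "k \<le> q"
  shows "middle_sum n k q = T q n k"
proof -
  have b: "binom_mod n j q = cnt q n (\<lambda>_. 1) (j mod int q)" for j
  proof -
    have "{A. A \<subseteq> {1..n} \<and> [int (card A) = j] (mod int q)}
        = {A. A \<subseteq> {1..n} \<and> (\<Sum>i\<in>A. (\<lambda>_. 1::int) i) mod int q = j mod int q}"
      by (simp add: cong_def)
    then show ?thesis unfolding binom_mod_def cnt_def by simp
  qed
  have "middle_sum n k q = (\<Sum>j\<in>W n k. cnt q n (\<lambda>_. 1) (j mod int q))"
    unfolding middle_sum_def W_def by (simp add: b)
  also have "\<dots> = T q n k"
    unfolding T_def R_def
    by (rule sum.reindex[symmetric, unfolded comp_def]) (rule inj_W[OF assms])
  finally show ?thesis .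
qed

lemma T_zero: "T q n 0 = 0"
proof -
  have "W n 0 = {}" unfolding W_def by auto
  then show ?thesis unfolding T_def R_def by simp
qed

lemma T_base: "1 \<le> k \<Longrightarrow> T q 0 k = 1"
proof -
  assume k: "1 \<le> k"
  have "(0::int) \<in> W 0 k" unfolding W_def using k by simp
  then have "0 \<in> R q 0 k" unfolding R_def by (rule rev_image_eqI) simp
  then show ?thesis unfolding T_def cnt_0 using finite_R by (simp add: sum.delta)
qed

lemma T_full: "q \<ge> 1 \<Longrightarrow> T q n q = 2 ^ n"
proof -
  assume q: "q \<ge> 1"
  have "R q n q = {0..<int q}"
    by (rule card_subset_eq) (use q R_sub card_R in auto)
  then show ?thesis unfolding T_def using sum_cnt_all[OF q] by simp
qed

lemma T_rec:
  assumes k1: "1 \<le> k" and kq: "k + 1 \<le> q"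
  shows "T q (Suc n) k = T q n (k + 1) + T q n (k - 1)"
proof -
  have q: "q \<ge> 1" using kq by simp
  let ?f = "\<lambda>j. j mod int q"
  let ?A = "W (Suc n) k"
  let ?B = "(\<lambda>j. j - 1) ` W (Suc n) k"
  have Bd: "?B = {j. j + 1 \<in> W (Suc n) k}" by force
  have U: "?A \<union> ?B = W n (k + 1)" unfolding Bd using k1 by (auto simp: W_def)
  have I: "?A \<inter> ?B = W n (k - 1)" unfolding Bd using k1 by (auto simp: W_def of_nat_diff)
  have sh: "shift q 1 (R q (Suc n) k) = ?f ` ?B"
    unfolding shift_def R_def image_image by (simp add: mod_diff_left_eq)
  have "T q (Suc n) k = (\<Sum>x\<in>R q (Suc n) k. cnt q n (\<lambda>_. 1) x) + (\<Sum>y\<in>shift q 1 (R q (Suc n) k). cnt q n (\<lambda>_. 1) y)"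
    unfolding T_def using sum_step[OF R_sub[OF q], of n "\<lambda>_. 1"] by simp
  also have "\<dots> = (\<Sum>x\<in>?f ` ?A \<union> ?f ` ?B. cnt q n (\<lambda>_. 1) x) + (\<Sum>x\<in>?f ` ?A \<inter> ?f ` ?B. cnt q n (\<lambda>_. 1) x)"
    unfolding sh unfolding R_def by (rule sum.union_inter[symmetric]) (auto simp: finite_W)
  also have "?f ` ?A \<union> ?f ` ?B = R q n (k + 1)" unfolding R_def U[symmetric] by (rule image_Un[symmetric])
  also have "?f ` ?A \<inter> ?f ` ?B = R q n (k - 1)" unfolding R_def I[symmetric]
    by (rule inj_on_image_Int[symmetric, OF inj_W[OF kq]]) (use U in auto)
  finally show ?thesis unfolding T_def .
qed

lemma chain:
  fixes f :: "nat \<Rightarrow> nat"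
  assumes conc: "\<And>k. 1 \<le> k \<Longrightarrow> k + 1 \<le> q \<Longrightarrow> f (k - 1) + f (k + 1) \<le> 2 * f k"
    and i1: "1 \<le> i" and ij: "i \<le> j"
  shows "j \<le> q \<Longrightarrow> f j + f (i - 1) \<le> f i + f (j - 1)"
  using ij
proof (induction j rule: dec_induct)
  case base then show ?case by simp
next
  case (step m)
  have IH: "f m + f (i - 1) \<le> f i + f (m - 1)" using step by simp
  have c: "f (m - 1) + f (m + 1) \<le> 2 * f m" using conc[of m] step i1 by simp
  show ?case using IH c by simp
qed

lemma spread:
  fixes f :: "nat \<Rightarrow> nat"
  assumes conc: "\<And>k. 1 \<le> k \<Longrightarrow> k + 1 \<le> q \<Longrightarrow> f (k - 1) + f (k + 1) \<le> 2 * f k"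
  shows "1 \<le> t \<Longrightarrow> t \<le> k \<Longrightarrow> k + t \<le> q \<Longrightarrow> f (k + t) + f (k - t) \<le> f (k + 1) + f (k - 1)"
proof (induction t)
  case 0 then show ?case by simp
next
  case (Suc s)
  show ?case
  proof (cases "s = 0")
    case True then show ?thesis by simp
  next
    case False
    have IH: "f (k + s) + f (k - s) \<le> f (k + 1) + f (k - 1)" using Suc False by simp
    have "f (k + Suc s) + f ((k - s) - 1) \<le> f (k - s) + f (k + Suc s - 1)"
      by (rule chain[OF conc]) (use Suc in auto)
    moreover have "(k - s) - 1 = k - Suc s" "k + Suc s - 1 = k + s" by auto
    ultimately show ?thesis using IH by simp
  qed
qed

lemma conc_T:
  assumes q: "q \<ge> 1"
  shows "1 \<le> k \<Longrightarrow> k + 1 \<le> q \<Longrightarrow> T q n (k - 1) + T q n (k + 1) \<le> 2 * T q n k"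
proof (induction n arbitrary: k)
  case 0
  have "T q 0 (k - 1) \<le> 1" using T_base[of "k - 1" q] T_zero[of q 0] by (cases "k - 1 = 0") auto
  then show ?case using T_base[of k q] T_base[of "k+1" q] 0 by simp
next
  case (Suc n)
  let ?m = "T q n"
  have IH: "\<And>k. 1 \<le> k \<Longrightarrow> k + 1 \<le> q \<Longrightarrow> ?m (k - 1) + ?m (k + 1) \<le> 2 * ?m k" using Suc.IH by blast
  have Tk: "T q (Suc n) k = ?m (k + 1) + ?m (k - 1)" using T_rec Suc.prems by blast
  have m0: "?m 0 = 0" by (rule T_zero)
  have Tk1: "T q (Suc n) (k + 1) = (if k + 1 = q then 2 * ?m (k + 1) else ?m (k + 2) + ?m k)"
  proof (cases "k + 1 = q")
    case True
    then show ?thesis using T_full[OF q, of "Suc n"] T_full[OF q, of n] by simp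
  next
    case False
    then have "T q (Suc n) (k + 1) = ?m (k + 1 + 1) + ?m (k + 1 - 1)" using T_rec[of "k+1" q n] Suc.prems by simp
    then show ?thesis using False by (simp add: numeral_2_eq_2)
  qed
  have Tkm: "T q (Suc n) (k - 1) = (if k = 1 then 0 else ?m k + ?m (k - 2))"
  proof (cases "k = 1")
    case True then show ?thesis using T_zero by simp
  next
    case False
    then have "T q (Suc n) (k - 1) = ?m (k - 1 + 1) + ?m (k - 1 - 1)" using T_rec[of "k-1" q n] Suc.prems by simp
    moreover have "k - 1 + 1 = k" "k - 1 - 1 = k - 2" using False Suc.prems by auto
    ultimately show ?thesis using False by simp
  qed
  have A: "k + 2 \<le> q \<Longrightarrow> ?m k + ?m (k + 2) \<le> 2 * ?m (k + 1)"
    using IH[of "k + 1"] by (simp add: numeral_2_eq_2)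
  have B: "k \<ge> 2 \<Longrightarrow> ?m (k - 2) + ?m k \<le> 2 * ?m (k - 1)"
    using IH[of "k - 1"] Suc.prems by (simp add: numeral_2_eq_2 Suc_diff_Suc)
  show ?case
  proof (cases "k = 1")
    case True
    show ?thesis
    proof (cases "k + 1 = q")
      case True
      then show ?thesis using Tk Tk1 Tkm m0 \<open>k = 1\<close> by simp
    next
      case False
      then show ?thesis using Tk Tk1 Tkm m0 \<open>k = 1\<close> A Suc.prems by simp
    qed
  next
    case False
    then have k2: "k \<ge> 2" using Suc.prems by simp
    show ?thesis
    proof (cases "k + 1 = q")
      case True
      then show ?thesis using Tk Tk1 Tkm False B[OF k2] by simp
    next
      case F2: False
      then show ?thesis using Tk Tk1 Tkm False B[OF k2] A Suc.prems by simp
    qed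
  qed
qed

lemma shift_full:
  assumes q: "q \<ge> 1" and cop: "coprime b (int q)" and P: "P \<subseteq> {0..<int q}"
    and inv: "shift q b P \<subseteq> P" and x: "x \<in> P"
  shows "P = {0..<int q}"
proof -
  have iter: "(x - int m * b) mod int q \<in> P" for m :: nat
  proof (induction m)
    case 0 then show ?case using x P by auto
  next
    case (Suc m)
    have e1: "x - int (Suc m) * b = (x - int m * b) - b" by (simp add: algebra_simps)
    have "(x - int (Suc m) * b) mod int q = ((x - int m * b) mod int q - b) mod int q"
      unfolding e1 by (simp add: mod_diff_left_eq)
    also have "\<dots> \<in> shift q b P" unfolding shift_def using Suc by blast
    finally show ?case using inv by blast
  qed
  obtain u where u: "[b * u = 1] (mod int q)" using cong_solve_coprime_int[OF cop] by blast
  have bu: "(b * u) mod int q = 1 mod int q" using u by (simp add: cong_def)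
  have "y \<in> P" if y: "y \<in> {0..<int q}" for y
  proof -
    define m where "m = nat (((x - y) * u) mod int q)"
    have im: "int m = ((x - y) * u) mod int q" unfolding m_def using q by simp
    have "(int m * b) mod int q = ((x - y) * u * b) mod int q" unfolding im by (simp add: mod_mult_left_eq)
    also have "\<dots> = ((x - y) * (b * u)) mod int q" by (simp add: algebra_simps)
    also have "\<dots> = ((x - y) * ((b * u) mod int q)) mod int q" by (simp add: mod_mult_right_eq)
    also have "\<dots> = ((x - y) * (1 mod int q)) mod int q" using bu by simp
    also have "\<dots> = (x - y) mod int q" by (simp add: mod_mult_right_eq)
    finally have e: "(int m * b) mod int q = (x - y) mod int q" .
    have "(x - int m * b) mod int q = (x - (int m * b) mod int q) mod int q" by (simp add: mod_diff_right_eq)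
    also have "\<dots> = (x - (x - y) mod int q) mod int q" using e by simp
    also have "\<dots> = (x - (x - y)) mod int q" by (simp add: mod_diff_right_eq)
    also have "\<dots> = y" using y by simp
    finally show ?thesis using iter[of m] by simp
  qed
  then show ?thesis using P by blast
qed

lemma main:
  assumes q: "q \<ge> 1"
  shows "(\<forall>i\<in>{1..n}. coprime (a i) (int q)) \<Longrightarrow> P \<subseteq> {0..<int q}
    \<Longrightarrow> (\<Sum>x\<in>P. cnt q n a x) \<le> T q n (card P)"
proof (induction n arbitrary: P)
  case 0
  have fin: "finite P" using 0 finite_subset by blast
  show ?case
  proof (cases "P = {}")
    case True then show ?thesis by simp
  next
    case False
    then have "card P \<ge> 1" using fin by (simp add: Suc_le_eq card_gt_0_iff)
    then show ?thesis unfolding cnt_0 using fin T_base[of "card P" q] by (simp add: sum.delta)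
  qed
next
  case (Suc n)
  have fin: "finite P" using Suc.prems finite_subset by blast
  define k where "k = card P"
  have kq: "k \<le> q" unfolding k_def using card_mono[OF _ Suc.prems(2)] by simp
  have cop: "\<forall>i\<in>{1..n}. coprime (a i) (int q)" using Suc.prems by simp
  show ?case
  proof (cases "k = 0")
    case True then show ?thesis unfolding k_def using fin by simp
  next
    case k0: False
    show ?thesis
    proof (cases "k = q")
      case True
      then show ?thesis unfolding k_def[symmetric] using T_full[OF q] sum_cnt_le[OF fin, of q "Suc n" a] by simp
    next
      case False
      then have kq1: "k + 1 \<le> q" using kq by simp
      let ?b = "a (Suc n)"
      let ?P' = "shift q ?b P"
      have copb: "coprime ?b (int q)" using Suc.prems by simp
      have P'sub: "?P' \<subseteq> {0..<int q}" by (rule shift_sub[OF q])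
      have finP': "finite ?P'" by (rule finite_shift[OF Suc.prems(2)])
      have cP': "card ?P' = k" unfolding k_def by (rule card_shift[OF Suc.prems(2)])
      have Usub: "P \<union> ?P' \<subseteq> {0..<int q}" using P'sub Suc.prems by auto
      have Isub: "P \<inter> ?P' \<subseteq> {0..<int q}" using Suc.prems by auto
      have sumeq: "(\<Sum>x\<in>P. cnt q (Suc n) a x) = (\<Sum>x\<in>P \<union> ?P'. cnt q n a x) + (\<Sum>x\<in>P \<inter> ?P'. cnt q n a x)"
        using sum_step[OF Suc.prems(2), of n a] sum.union_inter[OF fin finP', of "cnt q n a"] by simp
      have cardeq: "card (P \<union> ?P') + card (P \<inter> ?P') = 2 * k"
        using card_Un_Int[OF fin finP'] cP' k_def by simp
      have Ule: "card (P \<union> ?P') \<le> q" using card_mono[OF _ Usub] by simp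
      have Uge: "card (P \<union> ?P') > k"
      proof (rule ccontr)
        assume "\<not> card (P \<union> ?P') > k"
        moreover have "card P \<le> card (P \<union> ?P')" using fin finP' by (intro card_mono) auto
        ultimately have "card P = card (P \<union> ?P')" unfolding k_def by simp
        then have "P = P \<union> ?P'" using fin finP' by (intro card_subset_eq) auto
        then have "?P' \<subseteq> P" by blast
        moreover obtain x where "x \<in> P" using k0 k_def by fastforce
        ultimately have "P = {0..<int q}" using shift_full[OF q copb Suc.prems(2)] by blast
        then show False using False k_def by simp
      qed
      define t where "t = card (P \<union> ?P') - k"
      have t1: "1 \<le> t" "t \<le> k" "k + t \<le> q" using Uge cardeq Ule unfolding t_def by auto
      have cU: "card (P \<union> ?P') = k + t" and cI: "card (P \<inter> ?P') = k - t"
        using Uge cardeq unfolding t_def by auto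
      have "(\<Sum>x\<in>P. cnt q (Suc n) a x) \<le> T q n (k + t) + T q n (k - t)"
        unfolding sumeq using Suc.IH[OF cop Usub] Suc.IH[OF cop Isub] cU cI by (simp add: add_mono)
      also have "\<dots> \<le> T q n (k + 1) + T q n (k - 1)"
        by (rule spread[of q "T q n", OF conc_T[OF q]]) (use t1 in auto)
      also have "\<dots> = T q (Suc n) k" using T_rec[of k q n] k0 kq1 by simp
      finally show ?thesis unfolding k_def .
    qed
  qed
qed

theorem theorem1:
  fixes q n :: nat
  assumes "q \<ge> 1"
  shows "(\<forall>(a :: nat \<Rightarrow> int) (P :: int set).
            (\<forall>i\<in>{1..n}. coprime (a i) (int q)) \<and> P \<subseteq> {0..<int q}
            \<longrightarrow> hits q n a P \<le> middle_sum n (card P) q)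
       \<and> (\<forall>k \<le> q. \<exists>(a :: nat \<Rightarrow> int) (P :: int set).
            (\<forall>i\<in>{1..n}. coprime (a i) (int q)) \<and> P \<subseteq> {0..<int q} \<and> card P = k
            \<and> hits q n a P = middle_sum n k q)"
proof (intro conjI allI impI)
  fix a :: "nat \<Rightarrow> int" and P :: "int set"
  assume h: "(\<forall>i\<in>{1..n}. coprime (a i) (int q)) \<and> P \<subseteq> {0..<int q}"
  have fin: "finite P" using h finite_subset by blast
  have cq: "card P \<le> q" using card_mono[OF _ conjunct2[OF h]] by simp
  have "hits q n a P = (\<Sum>x\<in>P. cnt q n a x)" using hits_eq sum_cnt[OF fin] by simp
  also have "\<dots> \<le> T q n (card P)" using main[OF assms] h by blast
  also have "\<dots> = middle_sum n (card P) q" using middle_T[OF cq] by simp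
  finally show "hits q n a P \<le> middle_sum n (card P) q" .
next
  fix k assume k: "k \<le> q"
  have "hits q n (\<lambda>_. 1) (R q n k) = (\<Sum>x\<in>R q n k. cnt q n (\<lambda>_. 1) x)"
    using hits_eq sum_cnt[OF finite_R] by simp
  also have "\<dots> = middle_sum n k q" using middle_T[OF k] unfolding T_def by simp
  finally have "hits q n (\<lambda>_. 1) (R q n k) = middle_sum n k q" .
  then show "\<exists>(a :: nat \<Rightarrow> int) (P :: int set).
            (\<forall>i\<in>{1..n}. coprime (a i) (int q)) \<and> P \<subseteq> {0..<int q} \<and> card P = k
            \<and> hits q n a P = middle_sum n k q"
    using R_sub[OF assms] card_R[OF k] by (intro exI[of _ "\<lambda>_. 1"] exI[of _ "R q n k"]) auto
qed

end
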